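(* Let $n\ge2$, let $\Theta$ be a positive random variable with density and Laplace transform $f_\Theta^\star(s)=E[e^{-s\Theta}]$ satisfying $\int_0^\infty f_\Theta^\star(x)dx<\infty$, let $Z_1,\dots,Z_n$ be i.i.d. standard exponential and independent of $\Theta$ (this is the standing setup with $m=1$), $X_i=Z_i/\Theta$, $S_n=X_1+\cdots+X_n$, and $0<\kappa<1$. Then $$TVaR_\kappa(S_n)=\frac{n}{1-\kappa}\sum_{i=1}^{n}\frac{(-1)^{i+1}}{i!}VaR_\kappa(S_n)^{i}\,f_\Theta^{\star(i-1)}\big(VaR_\kappa(S_n)\big)+\frac{n}{1-\kappa}\int_{VaR_\kappa(S_n)}^\infty f_\Theta^\star(x)\,dx.$$
   Context: $f_\Theta^{\star(k)}$ denotes the $k$-th derivative of $f_\Theta^\star$. For $0<\kappa<1$, $VaR_\kappa(S_n)=\inf\{x:F_{S_n}(x)\ge\kappa\}$ with $F_{S_n}$ the cdf of $S_n$, and $TVaR_\kappa(S_n)=E[S_n\mid S_n>VaR_\kappa(S_n)]$. *)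

theory Defs
  imports "HOL-Probability.Probability"
begin

definition VaR :: "'a measure \<Rightarrow> ('a \<Rightarrow> real) \<Rightarrow> real \<Rightarrow> real" where
  "VaR M S k = Inf {x. measure M {\<omega> \<in> space M. S \<omega> \<le> x} \<ge> k}"

definition TVaR :: "'a measure \<Rightarrow> ('a \<Rightarrow> real) \<Rightarrow> real \<Rightarrow> real" where
  "TVaR M S k =
     (LINT \<omega>|M. S \<omega> * indicator {\<omega> \<in> space M. S \<omega> > VaR M S k} \<omega>)
       / measure M {\<omega> \<in> space M. S \<omega> > VaR M S k}"

definition laplace_tr :: "'a measure \<Rightarrow> ('a \<Rightarrow> real) \<Rightarrow> real \<Rightarrow> real" where
  "laplace_tr M \<Theta> s = (LINT \<omega>|M. exp (- s * \<Theta> \<omega>))"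

end

theory Submission
  imports Defs
begin


lemma exp_pow_bound:
  fixes x :: real assumes "0 \<le> x" shows "x ^ m / fact m \<le> exp x"
proof -
  have s: "(\<lambda>n. x ^ n / fact n) sums exp x" using exp_converges[of x] by (simp add: divide_inverse_commute)
  have "(\<Sum>n\<in>{m}. x ^ n / fact n) \<le> exp x"
    apply (subst sums_unique[OF s])
    apply (rule sum_le_suminf)
    using s assms by (auto simp: sums_summable)
  then show ?thesis by simp
qed

lemma pow_exp_bound:
  fixes \<theta> c :: real assumes "0 < c" "0 \<le> \<theta>"
  shows "\<theta> ^ m * exp (- c * \<theta>) \<le> fact m / c ^ m"
proof -
  have "(c*\<theta>) ^ m / fact m \<le> exp (c*\<theta>)" using assms by (intro exp_pow_bound) simp
  then have "c^m * \<theta>^m \<le> fact m * exp (c*\<theta>)"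
    by (simp add: power_mult_distrib field_simps)
  then have "c^m * (\<theta>^m * exp (- c*\<theta>)) \<le> fact m"
    by (simp add: exp_minus field_simps)
  then show ?thesis using assms by (simp add: field_simps)
qed

lemma exp_taylor2: fixes u :: real shows "\<bar>exp u - 1 - u\<bar> \<le> u^2 * exp \<bar>u\<bar>"
proof -
  obtain t where t: "\<bar>t\<bar> \<le> \<bar>u\<bar>" "exp u = (\<Sum>m<2. u ^ m / fact m) + exp t / fact 2 * u ^ 2"
    using Maclaurin_exp_le[of u 2] by blast
  have "exp u - 1 - u = exp t / 2 * u^2" using t(2) by (simp add: numeral_2_eq_2)
  moreover have "exp t \<le> exp \<bar>u\<bar>" using t(1) by simp
  moreover have "0 \<le> exp t / 2 * u^2" by simp
  ultimately have "\<bar>exp u - 1 - u\<bar> = exp t / 2 * u^2" by (simp only: abs_of_nonneg)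
  also have "\<dots> \<le> exp \<bar>u\<bar> * u^2" using \<open>exp t \<le> exp \<bar>u\<bar>\<close>
  proof (intro mult_right_mono)
    show "exp t / 2 \<le> exp \<bar>u\<bar>" using \<open>exp t \<le> exp \<bar>u\<bar>\<close> exp_gt_zero[of t] by linarith
  qed simp
  finally show ?thesis by (simp add: mult.commute)
qed

lemma pointwise_taylor:
  fixes \<theta> x y :: real
  assumes "0 \<le> \<theta>" "0 < x" "\<bar>y - x\<bar> \<le> x / 2"
  shows "\<bar>(-\<theta>)^k*exp(-y*\<theta>) - (-\<theta>)^k*exp(-x*\<theta>) - (y-x)*((-\<theta>)^(Suc k)*exp(-x*\<theta>))\<bar>
         \<le> (y-x)^2 * (\<theta>^(k+2) * exp(-(x/2)*\<theta>))"
proof -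
  define h where "h = y - x"
  have eq: "(-\<theta>)^k*exp(-y*\<theta>) - (-\<theta>)^k*exp(-x*\<theta>) - (y-x)*((-\<theta>)^(Suc k)*exp(-x*\<theta>))
        = (-\<theta>)^k*exp(-x*\<theta>) * (exp (-h*\<theta>) - 1 - (-h*\<theta>))"
    by (simp add: h_def algebra_simps exp_add[symmetric])
  have b: "\<bar>exp (-h*\<theta>) - 1 - (-h*\<theta>)\<bar> \<le> (h*\<theta>)^2 * exp (\<bar>h\<bar>*\<theta>)"
    using exp_taylor2[of "-h*\<theta>"] assms by (simp add: abs_mult power2_eq_square)
  have hb: "\<bar>h\<bar>*\<theta> \<le> x/2*\<theta>" using assms unfolding h_def by (intro mult_right_mono) auto
  have "\<bar>(-\<theta>)^k*exp(-x*\<theta>) * (exp (-h*\<theta>) - 1 - (-h*\<theta>))\<bar>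
      = \<theta>^k*exp(-x*\<theta>) * \<bar>exp (-h*\<theta>) - 1 - (-h*\<theta>)\<bar>"
    using assms by (simp add: abs_mult power_abs)
  also have "\<dots> \<le> \<theta>^k*exp(-x*\<theta>) * ((h*\<theta>)^2 * exp (x/2*\<theta>))"
  proof (intro mult_left_mono)
    have "(h*\<theta>)^2 * exp (\<bar>h\<bar>*\<theta>) \<le> (h*\<theta>)^2 * exp (x/2*\<theta>)"
      using hb by (intro mult_left_mono) auto
    then show "\<bar>exp (-h*\<theta>) - 1 - (-h*\<theta>)\<bar> \<le> (h*\<theta>)^2 * exp (x/2*\<theta>)" using b by linarith
  qed (use assms in auto)
  also have "\<dots> = h^2 * (\<theta>^(k+2) * (exp(-x*\<theta>) * exp (x/2*\<theta>)))"
    by (simp add: power_mult_distrib power_add algebra_simps power2_eq_square)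
  also have "exp(-x*\<theta>) * exp (x/2*\<theta>) = exp(-(x/2)*\<theta>)"
    by (simp add: exp_add[symmetric] field_simps)
  finally show ?thesis using eq by (simp add: h_def)
qed



lemma (in prob_space) lap_integrable:
  fixes T :: "'a \<Rightarrow> real"
  assumes T: "T \<in> borel_measurable M" and pos: "\<forall>\<omega>\<in>space M. 0 \<le> T \<omega>" and t: "0 < t"
  shows "integrable M (\<lambda>\<omega>. (-T \<omega>)^k * exp(-t*T \<omega>))"
proof (rule integrable_const_bound[where B="fact k / t^k"])
  show "AE \<omega> in M. norm ((-T \<omega>)^k * exp(-t*T \<omega>)) \<le> fact k / t^k"
  proof (rule AE_I2)
    fix \<omega> assume "\<omega> \<in> space M"
    then have "0 \<le> T \<omega>" using pos by auto
    then show "norm ((-T \<omega>)^k * exp(-t*T \<omega>)) \<le> fact k / t^k"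
      using pow_exp_bound[OF t, of "T \<omega>" k] by (simp add: abs_mult power_abs)
  qed
qed (use T in measurable)

lemma (in prob_space) lap_deriv:
  fixes T :: "'a \<Rightarrow> real"
  assumes T: "T \<in> borel_measurable M" and pos: "\<forall>\<omega>\<in>space M. 0 \<le> T \<omega>" and x: "0 < x"
  shows "((\<lambda>t. LINT \<omega>|M. (-T \<omega>)^k * exp(-t*T \<omega>)) has_real_derivative
           (LINT \<omega>|M. (-T \<omega>)^(Suc k) * exp(-x*T \<omega>))) (at x)"
proof -
  define F where "F = (\<lambda>t. LINT \<omega>|M. (-T \<omega>)^k * exp(-t*T \<omega>))"
  define D where "D = (LINT \<omega>|M. (-T \<omega>)^(Suc k) * exp(-x*T \<omega>))"
  define C where "C = fact (k+2) / (x/2)^(k+2)"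
  have xh: "0 < x/2" using x by simp
  have bnd: "\<bar>(F (x+h) - F x)/h - D\<bar> \<le> \<bar>h\<bar> * C" if h: "h \<noteq> 0" "\<bar>h\<bar> \<le> x/2" for h
  proof -
    have xh': "0 < x + h" using h x by linarith
    let ?g = "\<lambda>\<omega>. (-T \<omega>)^k*exp(-(x+h)*T \<omega>) - (-T \<omega>)^k*exp(-x*T \<omega>) - h*((-T \<omega>)^(Suc k)*exp(-x*T \<omega>))"
    have i1: "integrable M (\<lambda>\<omega>. (-T \<omega>)^k*exp(-(x+h)*T \<omega>))" by (rule lap_integrable[OF T pos xh'])
    have i2: "integrable M (\<lambda>\<omega>. (-T \<omega>)^k*exp(-x*T \<omega>))" by (rule lap_integrable[OF T pos x])
    have i3: "integrable M (\<lambda>\<omega>. (-T \<omega>)^(Suc k)*exp(-x*T \<omega>))" by (rule lap_integrable[OF T pos x])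
    have eq: "F (x+h) - F x - h * D = (LINT \<omega>|M. ?g \<omega>)"
      unfolding F_def D_def using i1 i2 i3 by simp
    have "\<bar>LINT \<omega>|M. ?g \<omega>\<bar> \<le> (LINT \<omega>|M. \<bar>?g \<omega>\<bar>)"
      using integral_norm_bound[of M ?g] by simp
    also have "\<dots> \<le> (LINT \<omega>|M. h^2 * C)"
    proof (rule integral_mono)
      show "integrable M (\<lambda>\<omega>. \<bar>?g \<omega>\<bar>)" using i1 i2 i3 by auto
      show "integrable M (\<lambda>\<omega>. h^2 * C)" by simp
      fix \<omega> assume "\<omega> \<in> space M"
      then have t0: "0 \<le> T \<omega>" using pos by auto
      have "\<bar>?g \<omega>\<bar> \<le> ((x+h)-x)^2 * (T \<omega>^(k+2) * exp(-(x/2)*T \<omega>))"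
        using pointwise_taylor[OF t0 x, of "x+h" k] h by simp
      also have "\<dots> = h^2 * (T \<omega>^(k+2) * exp(-(x/2)*T \<omega>))" by simp
      also have "\<dots> \<le> h^2 * C"
        unfolding C_def using pow_exp_bound[OF xh t0, of "k+2"] by (intro mult_left_mono) auto
      finally show "\<bar>?g \<omega>\<bar> \<le> h^2 * C" .
    qed
    also have "\<dots> = h^2 * C" by (simp add: prob_space)
    finally have "\<bar>F (x+h) - F x - h * D\<bar> \<le> h^2 * C" using eq by simp
    moreover have "(F (x+h) - F x)/h - D = (F (x+h) - F x - h * D) / h" using h by (simp add: field_simps)
    moreover have "h^2 * C = \<bar>h\<bar> * (C * \<bar>h\<bar>)" by (simp add: power2_eq_square)
    ultimately show ?thesis using h by (simp add: abs_divide divide_le_eq)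
  qed
  have "((\<lambda>h. (F (x+h) - F x)/h - D) \<longlongrightarrow> 0) (at 0)"
  proof (rule Lim_null_comparison)
    show "\<forall>\<^sub>F h in at 0. norm ((F (x+h) - F x)/h - D) \<le> \<bar>h\<bar> * C"
      unfolding eventually_at using xh bnd
      by (intro exI[of _ "x/2"]) (auto simp: dist_real_def)
    show "((\<lambda>h. \<bar>h\<bar> * C) \<longlongrightarrow> 0) (at 0)"
      by (auto intro!: tendsto_eq_intros)
  qed
  then have "((\<lambda>h. (F (x+h) - F x)/h) \<longlongrightarrow> D) (at 0)" by (simp add: LIM_zero_iff)
  then show ?thesis unfolding F_def D_def DERIV_def .
qed



lemma (in prob_space) lap_iter_deriv:
  fixes T :: "'a \<Rightarrow> real"
  assumes T: "T \<in> borel_measurable M" and pos: "\<forall>\<omega>\<in>space M. 0 \<le> T \<omega>"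
  shows "\<forall>x>0. (deriv^^k) (\<lambda>t. LINT \<omega>|M. exp(-t*T \<omega>)) x = (LINT \<omega>|M. (-T \<omega>)^k * exp(-x*T \<omega>))"
proof (induction k)
  case 0 then show ?case by simp
next
  case (Suc k)
  show ?case
  proof (intro allI impI)
    fix x :: real assume x: "0 < x"
    have ev: "eventually (\<lambda>y. (deriv^^k) (\<lambda>t. LINT \<omega>|M. exp(-t*T \<omega>)) y = (LINT \<omega>|M. (-T \<omega>)^k * exp(-y*T \<omega>))) (nhds x)"
      using eventually_nhds_in_open[of "{0<..}" x] x Suc.IH by (auto elim!: eventually_mono)
    have "(deriv^^Suc k) (\<lambda>t. LINT \<omega>|M. exp(-t*T \<omega>)) x = deriv ((deriv^^k) (\<lambda>t. LINT \<omega>|M. exp(-t*T \<omega>))) x"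
      by simp
    also have "\<dots> = deriv (\<lambda>y. LINT \<omega>|M. (-T \<omega>)^k * exp(-y*T \<omega>)) x"
      by (rule deriv_cong_ev[OF ev refl])
    also have "\<dots> = (LINT \<omega>|M. (-T \<omega>)^(Suc k) * exp(-x*T \<omega>))"
      by (rule DERIV_imp_deriv[OF lap_deriv[OF T pos x]])
    finally show "(deriv^^Suc k) (\<lambda>t. LINT \<omega>|M. exp(-t*T \<omega>)) x = (LINT \<omega>|M. (-T \<omega>)^(Suc k) * exp(-x*T \<omega>))" .
  qed
qed

lemma var_lemma:
  fixes F :: "real \<Rightarrow> real"
  assumes mono: "mono F" and cont: "\<And>x. isCont F x" and top: "(F \<longlongrightarrow> 1) at_top"
    and F0: "F 0 = 0" and k: "0 < \<kappa>" "\<kappa> < 1"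
  shows "Inf {x. F x \<ge> \<kappa>} > 0 \<and> F (Inf {x. F x \<ge> \<kappa>}) = \<kappa>"
proof -
  define A where "A = {x. F x \<ge> \<kappa>}"
  have "eventually (\<lambda>x. F x > \<kappa>) at_top" using order_tendstoD(1)[OF top] k by simp
  then obtain x0 where "F x0 > \<kappa>" by (meson eventually_at_top_linorder order.refl)
  then have ne: "A \<noteq> {}" unfolding A_def by (auto intro!: exI[of _ x0])
  have pos: "x > 0" if "x \<in> A" for x
  proof (rule ccontr)
    assume "\<not> x > 0"
    then have "F x \<le> F 0" using mono by (auto simp: mono_def)
    then show False using that k F0 unfolding A_def by auto
  qed
  have bdd: "bdd_below A" using pos by (meson bdd_below.I less_imp_le)
  have cl: "closed A" unfolding A_def
    by (rule closed_Collect_le) (auto intro!: continuous_intros continuous_at_imp_continuous_on cont)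
  have inA: "Inf A \<in> A" by (rule closed_contains_Inf[OF ne bdd cl])
  have "F (Inf A) \<le> \<kappa>"
  proof (rule tendsto_upperbound)
    show "(F \<longlongrightarrow> F (Inf A)) (at_left (Inf A))"
      using cont[of "Inf A"] by (simp add: isCont_def filterlim_at_split)
    show "\<forall>\<^sub>F y in at_left (Inf A). F y \<le> \<kappa>"
    proof -
      have "F y \<le> \<kappa>" if "y < Inf A" for y
      proof (rule ccontr)
        assume "\<not> F y \<le> \<kappa>"
        then have "y \<in> A" unfolding A_def by auto
        then have "Inf A \<le> y" using bdd by (rule cInf_lower)
        then show False using that by simp
      qed
      then show ?thesis by (auto simp: eventually_at_filter intro!: always_eventually)
    qed
  qed simp
  with inA pos show ?thesis unfolding A_def by auto
qed



lemma (in prob_space) joint_nn: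
  fixes X Y :: "'a \<Rightarrow> real"
  assumes ind: "indep_var borel X borel Y" and Yd: "distributed M lborel Y g"
    and G[measurable]: "G \<in> borel_measurable (borel \<Otimes>\<^sub>M borel)"
  shows "(\<integral>\<^sup>+\<omega>. G (X \<omega>, Y \<omega>) \<partial>M) = (\<integral>\<^sup>+\<omega>. (\<integral>\<^sup>+y. g y * G (X \<omega>, y) \<partial>lborel) \<partial>M)"
proof -
  have rv[measurable]: "X \<in> borel_measurable M" "Y \<in> borel_measurable M"
    using ind unfolding indep_var_distribution_eq by auto
  have eq: "distr M borel X \<Otimes>\<^sub>M distr M borel Y = distr M (borel \<Otimes>\<^sub>M borel) (\<lambda>x. (X x, Y x))"
    using ind unfolding indep_var_distribution_eq by auto
  interpret PX: prob_space "distr M borel X" by (rule prob_space_distr) (rule rv)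
  interpret PY: prob_space "distr M borel Y" by (rule prob_space_distr) (rule rv)
  interpret PXY: pair_prob_space "distr M borel X" "distr M borel Y" ..
  have g[measurable]: "g \<in> borel_measurable borel" using Yd unfolding distributed_def by auto
  have dY: "distr M borel Y = density lborel g"
  proof -
    have "distr M borel Y = distr M lborel Y" by (rule distr_cong) auto
    then show ?thesis using Yd unfolding distributed_def by auto
  qed
  have "(\<integral>\<^sup>+\<omega>. G (X \<omega>, Y \<omega>) \<partial>M) = (\<integral>\<^sup>+p. G p \<partial>distr M (borel \<Otimes>\<^sub>M borel) (\<lambda>x. (X x, Y x)))"
    by (subst nn_integral_distr) auto
  also have "\<dots> = (\<integral>\<^sup>+p. G p \<partial>(distr M borel X \<Otimes>\<^sub>M distr M borel Y))" using eq by simp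
  also have "\<dots> = (\<integral>\<^sup>+x. (\<integral>\<^sup>+y. G (x,y) \<partial>distr M borel Y) \<partial>distr M borel X)"
    by (rule PY.nn_integral_fst[symmetric]) simp
  also have "\<dots> = (\<integral>\<^sup>+\<omega>. (\<integral>\<^sup>+y. G (X \<omega>,y) \<partial>distr M borel Y) \<partial>M)"
    by (subst nn_integral_distr) auto
  also have "\<dots> = (\<integral>\<^sup>+\<omega>. (\<integral>\<^sup>+y. g y * G (X \<omega>, y) \<partial>lborel) \<partial>M)"
    unfolding dY by (subst nn_integral_density) auto
  finally show ?thesis .
qed



lemma (in prob_space) lap_integrable2:
  fixes T :: "'a \<Rightarrow> real"
  assumes T: "T \<in> borel_measurable M" and pos: "\<forall>\<omega>\<in>space M. 0 \<le> T \<omega>" and t: "0 < t"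
  shows "integrable M (\<lambda>\<omega>. T \<omega>^k * exp(-t*T \<omega>))"
proof (rule integrable_const_bound[where B="fact k / t^k"])
  show "AE \<omega> in M. norm (T \<omega>^k * exp(-t*T \<omega>)) \<le> fact k / t^k"
  proof (rule AE_I2)
    fix \<omega> assume "\<omega> \<in> space M"
    then have "0 \<le> T \<omega>" using pos by auto
    then show "norm (T \<omega>^k * exp(-t*T \<omega>)) \<le> fact k / t^k"
      using pow_exp_bound[OF t, of "T \<omega>" k] by (simp add: abs_mult power_abs)
  qed
qed (use T in measurable)

lemma neg1: "(-1::real)^(Suc j + 1) * (-1)^j = 1"
proof -
  have "(-1::real)^(Suc j + 1) = (-1)^j" by simp
  moreover have "(-1::real)^j * (-1)^j = 1" by (simp flip: power_mult_distrib)
  ultimately show ?thesis by simp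
qed

lemma negp: "(-a::real)^j * b = (-1)^j * (a^j * b)"
  by (simp add: power_minus[of a])

lemma final_alg: "(p * (q + r :: real)) / (1 - u) = p / (1 - u) * r + p / (1 - u) * q"
  by (simp add: distrib_left add_divide_distrib)

lemma tail_exp_nn:
  fixes t a :: real assumes t: "0 < t"
  shows "(\<integral>\<^sup>+x. ennreal (exp(-x*t)) * indicator {a..} x \<partial>lborel) = ennreal (exp(-a*t)/t)"
proof -
  have "(\<integral>\<^sup>+x. ennreal (exp(-x*t)) * indicator {a..} x \<partial>lborel) = ennreal (0 - (- exp(-a*t)/t))"
  proof (rule nn_integral_FTC_atLeast)
    show "((\<lambda>x. - exp(-x*t)/t) has_real_derivative exp(-x*t)) (at x)" for x
      using t by (auto intro!: derivative_eq_intros simp: field_simps)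
    have lim0: "((\<lambda>x. exp(-x*t)) \<longlongrightarrow> 0) at_top"
    proof (rule filterlim_compose[OF exp_at_bot])
      have "filterlim (\<lambda>x. t * x) at_top at_top"
        by (rule filterlim_tendsto_pos_mult_at_top[OF tendsto_const t filterlim_ident])
      then show "filterlim (\<lambda>x. -x*t) at_bot at_top"
        by (simp add: filterlim_uminus_at_top mult.commute)
    qed
    show "((\<lambda>x. - exp(-x*t)/t) \<longlongrightarrow> 0) at_top"
      using tendsto_divide[OF tendsto_minus[OF lim0] tendsto_const[of t]] t by simp
  qed auto
  then show ?thesis by simp
qed

lemma inner_erl:
  fixes t a :: real and n :: nat
  assumes t: "0 < t" and a: "0 < a" and n: "n \<ge> 1"
  shows "(\<integral>\<^sup>+y. ennreal (erlang_density (n-1) 1 y) * ennreal (if a < y/t then y/t else 0) \<partial>lborel)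
       = ennreal (real n * (exp(-a*t)/t + (\<Sum>k=1..n. a^k/fact k * (t^(k-1) * exp(-a*t)))))"
proof -
  obtain m where m: "n = Suc m" using n by (cases n) auto
  have pw: "ennreal (erlang_density (n-1) 1 y) * ennreal (if a < y/t then y/t else 0)
      = ennreal (real n / t) * (ennreal (erlang_density n 1 y) * indicator {a*t<..} y)" for y
  proof (cases "a < y/t")
    case True
    then have y: "a*t < y" "0 < y" using t a by (auto simp: field_simps intro: less_trans[OF mult_pos_pos[OF a t]])
    have fs: "fact (Suc m) = real (Suc m) * (fact m :: real)" by simp
    have "erlang_density (n-1) 1 y * (y/t) = y^(Suc m) * exp (-y) / (t * fact m)"
      using y unfolding m erlang_density_def by (simp add: field_simps)
    also have "\<dots> = real n / t * erlang_density n 1 y"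
      using y t unfolding m erlang_density_def fs by (simp add: field_simps del: of_nat_Suc)
    finally have "erlang_density (n-1) 1 y * (y/t) = real n / t * erlang_density n 1 y" .
    then show ?thesis using True y t
      by (simp add: ennreal_mult[symmetric] erlang_density_nonneg indicator_def)
  next
    case False
    then have "\<not> a*t < y" using t by (simp add: field_simps)
    then show ?thesis using False by (simp add: indicator_def)
  qed
  interpret PE: prob_space "density lborel (erlang_density n 1)" by (rule prob_space_erlang_density) simp
  have vt: "0 \<le> a*t" using a t by simp
  have cdf: "measure (density lborel (erlang_density n 1)) {..a*t} = erlang_CDF n 1 (a*t)"
    using emeasure_erlang_density[of 1 n "a*t"] by (simp add: measure_def)
  have "emeasure (density lborel (erlang_density n 1)) {a*t<..}
      = ennreal (measure (density lborel (erlang_density n 1)) (UNIV - {..a*t}))"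
    by (simp add: PE.emeasure_eq_measure Compl_eq_Diff_UNIV[symmetric])
  also have "\<dots> = ennreal (1 - erlang_CDF n 1 (a*t))"
    using PE.prob_compl[of "{..a*t}"] cdf by simp
  finally have tail: "emeasure (density lborel (erlang_density n 1)) {a*t<..} = ennreal (1 - erlang_CDF n 1 (a*t))" .
  have "(\<integral>\<^sup>+y. ennreal (erlang_density (n-1) 1 y) * ennreal (if a < y/t then y/t else 0) \<partial>lborel)
      = (\<integral>\<^sup>+y. ennreal (real n / t) * (ennreal (erlang_density n 1 y) * indicator {a*t<..} y) \<partial>lborel)"
    by (simp only: pw)
  also have "\<dots> = ennreal (real n / t) * emeasure (density lborel (erlang_density n 1)) {a*t<..}"
    by (subst nn_integral_cmult) (auto simp: emeasure_density)
  also have "\<dots> = ennreal (real n / t * (1 - erlang_CDF n 1 (a*t)))"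
    unfolding tail using t by (subst ennreal_mult) (auto simp: erlang_CDF_def intro!: sum_nonneg)
  also have "real n / t * (1 - erlang_CDF n 1 (a*t))
      = real n * (exp(-a*t)/t + (\<Sum>k=1..n. a^k/fact k * (t^(k-1) * exp(-a*t))))"
  proof -
    have "1 - erlang_CDF n 1 (a*t) = (\<Sum>j\<le>n. (a*t)^j * exp(-(a*t))/fact j)"
      using vt by (simp add: erlang_CDF_def)
    also have "\<dots> = exp(-(a*t)) + (\<Sum>j=1..n. (a*t)^j * exp(-(a*t))/fact j)"
    proof -
      have "{..n} = insert 0 {1..n}" by auto
      then show ?thesis by simp
    qed
    finally have e: "1 - erlang_CDF n 1 (a*t) = exp(-(a*t)) + (\<Sum>j=1..n. (a*t)^j * exp(-(a*t))/fact j)" .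
    have s: "(\<Sum>j=1..n. (a*t)^j * exp(-(a*t))/fact j) = t * (\<Sum>k=1..n. a^k/fact k * (t^(k-1) * exp(-a*t)))"
      unfolding sum_distrib_left
    proof (rule sum.cong)
      fix k assume "k \<in> {1..n}"
      then obtain j where j: "k = Suc j" by (cases k) auto
      show "(a*t)^k * exp(-(a*t))/fact k = t * (a^k/fact k * (t^(k-1) * exp(-a*t)))"
        unfolding j by (simp add: power_mult_distrib field_simps)
    qed simp
    show ?thesis unfolding e s using t by (simp add: field_simps)
  qed
  finally show ?thesis .
qed



theorem corollary3:
  fixes M :: "'a measure" and \<Theta> :: "'a \<Rightarrow> real" and Z :: "nat \<Rightarrow> 'a \<Rightarrow> real"
    and n :: nat and \<kappa> :: real
  assumes "prob_space M"
    and "n \<ge> 2"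
    and "\<forall>\<omega>\<in>space M. \<Theta> \<omega> > 0"
    and "\<exists>f. distributed M lborel \<Theta> f"
    and "set_integrable lborel {0..} (laplace_tr M \<Theta>)"
    and "\<And>i. i \<in> {1..n} \<Longrightarrow>
           distributed M lborel (Z i) (\<lambda>x. ennreal (exponential_density 1 x))"
    and "prob_space.indep_vars M (\<lambda>_. borel) (\<lambda>i. if i = 0 then \<Theta> else Z i) {0..n}"
    and "0 < \<kappa>" and "\<kappa> < 1"
  shows "let S = (\<lambda>\<omega>. \<Sum>i=1..n. Z i \<omega> / \<Theta> \<omega>);
             v = VaR M S \<kappa>;
             L = laplace_tr M \<Theta>
         in TVaR M S \<kappa> =
              real n / (1 - \<kappa>) *
                (\<Sum>i=1..n. (-1) ^ (i + 1) / fact i * v ^ i * (deriv ^^ (i - 1)) L v)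
            + real n / (1 - \<kappa>) * (LBINT x:{v..}. L x)"
proof -
  interpret prob_space M by (rule assms(1))
  note Tpos = assms(3)
  define Y where "Y = (\<lambda>i. if i = 0 then \<Theta> else Z i)"
  have indY: "indep_vars (\<lambda>_. borel) Y {0..n}" using assms(7) unfolding Y_def .
  obtain f\<Theta> where "distributed M lborel \<Theta> f\<Theta>" using assms(4) by blast
  then have Tm[measurable]: "\<Theta> \<in> borel_measurable M" by (auto simp: distributed_def)
  have Zd: "distributed M lborel (Z i) (exponential_density 1)" if "i \<in> {1..n}" for i
    using assms(6)[OF that] by simp
  have Zm[measurable]: "Z i \<in> borel_measurable M" if "i \<in> {1..n}" for i
    using Zd[OF that] by (auto simp: distributed_def)
  define W where "W = (\<lambda>\<omega>. \<Sum>i\<in>{1..n}. Z i \<omega>)"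
  have Wm[measurable]: "W \<in> borel_measurable M" unfolding W_def using Zm by auto
  have n0: "{0..n} = insert 0 {1..n}" by auto
  have indTW: "indep_var borel \<Theta> borel W"
  proof -
    have "indep_var borel (Y 0) borel (\<lambda>\<omega>. \<Sum>i\<in>{1..n}. Y i \<omega>)"
      by (rule indep_vars_sum) (use indY n0 in auto)
    moreover have "(\<lambda>\<omega>. \<Sum>i\<in>{1..n}. Y i \<omega>) = W" unfolding W_def Y_def by (auto intro!: sum.cong)
    ultimately show ?thesis by (simp add: Y_def)
  qed
  have indZ: "indep_vars (\<lambda>_. borel) Z {1..n}"
  proof -
    have "indep_vars (\<lambda>_. borel) Y {1..n}" by (rule indep_vars_subset[OF indY]) auto
    then show ?thesis by (subst indep_vars_cong[of _ _ _ Y]) (auto simp: Y_def)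
  qed
  have Wd: "distributed M lborel W (erlang_density (n-1) 1)"
    using exponential_distributed_sum[of "{1..n}" 1 Z, OF _ _ _ Zd indZ] assms(2) unfolding W_def by auto
  define S where "S = (\<lambda>\<omega>. \<Sum>i=1..n. Z i \<omega> / \<Theta> \<omega>)"
  have SW: "S = (\<lambda>\<omega>. W \<omega> / \<Theta> \<omega>)" unfolding S_def W_def by (simp add: sum_divide_distrib)
  have Sm[measurable]: "S \<in> borel_measurable M" unfolding SW by measurable
  define F where "F = (\<lambda>x. measure M {\<omega>\<in>space M. S \<omega> \<le> x})"
  define DS where "DS = distr M borel S"
  interpret DS: real_distribution DS unfolding DS_def by auto
  have F_cdf: "F = cdf DS"
    unfolding F_def DS_def by (auto simp: cdf_def measure_distr intro!: arg_cong[where f="measure M"])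
  have atom: "measure DS {x} = 0" for x
  proof -
    have "emeasure M {\<omega>\<in>space M. S \<omega> = x} = (\<integral>\<^sup>+\<omega>. indicator {\<omega>\<in>space M. S \<omega> = x} \<omega> \<partial>M)"
      by (subst nn_integral_indicator) auto
    also have "\<dots> = (\<integral>\<^sup>+\<omega>. (\<lambda>p. if snd p = x * fst p then 1 else 0 :: ennreal) (\<Theta> \<omega>, W \<omega>) \<partial>M)"
    proof (rule nn_integral_cong)
      fix \<omega> assume "\<omega> \<in> space M"
      then have "\<Theta> \<omega> > 0" using Tpos by auto
      then show "indicator {\<omega>\<in>space M. S \<omega> = x} \<omega> = (\<lambda>p. if snd p = x * fst p then 1 else 0 :: ennreal) (\<Theta> \<omega>, W \<omega>)"
        using \<open>\<omega> \<in> space M\<close> by (auto simp: SW field_simps indicator_def)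
    qed
    also have "\<dots> = (\<integral>\<^sup>+\<omega>. (\<integral>\<^sup>+y. erlang_density (n-1) 1 y * (\<lambda>p. if snd p = x * fst p then 1 else 0 :: ennreal) (\<Theta> \<omega>, y) \<partial>lborel) \<partial>M)"
      by (rule joint_nn[OF indTW Wd]) measurable
    also have "\<dots> = (\<integral>\<^sup>+\<omega>. 0 \<partial>M)"
    proof (rule nn_integral_cong)
      fix \<omega>
      show "(\<integral>\<^sup>+y. erlang_density (n-1) 1 y * (\<lambda>p. if snd p = x * fst p then 1 else 0 :: ennreal) (\<Theta> \<omega>, y) \<partial>lborel) = 0"
        apply (rule nn_integral_zero')
        using AE_lborel_singleton[of "x * \<Theta> \<omega>"] by eventually_elim auto
    qed
    finally have "emeasure M {\<omega>\<in>space M. S \<omega> = x} = 0" by simp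
    then have "measure M {\<omega>\<in>space M. S \<omega> = x} = 0" by (simp add: measure_def)
    moreover have "measure DS {x} = measure M {\<omega>\<in>space M. S \<omega> = x}"
      unfolding DS_def by (subst measure_distr) (auto intro!: arg_cong[where f="measure M"])
    ultimately show ?thesis by simp
  qed
  have F0: "F 0 = 0"
  proof -
    have "{\<omega>\<in>space M. S \<omega> \<le> 0} = {\<omega>\<in>space M. W \<omega> \<le> 0}"
      using Tpos by (auto simp: SW divide_le_0_iff less_imp_le)
    then have "F 0 = prob {\<omega>\<in>space M. W \<omega> \<le> 0}" unfolding F_def by simp
    also have "\<dots> = erlang_CDF (n-1) 1 0" by (rule erlang_distributed_le[OF Wd]) auto
    finally show ?thesis by (simp add: erlang_CDF_at0)
  qed
  define v where "v = VaR M S \<kappa>"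
  have vF: "v > 0 \<and> F v = \<kappa>"
  proof -
    have "Inf {x. F x \<ge> \<kappa>} > 0 \<and> F (Inf {x. F x \<ge> \<kappa>}) = \<kappa>"
    proof (rule var_lemma)
      show "mono F" unfolding F_cdf by (auto intro: monoI DS.cdf_nondecreasing)
      show "isCont F x" for x unfolding F_cdf using DS.isCont_cdf atom by auto
      show "(F \<longlongrightarrow> 1) at_top" unfolding F_cdf by (rule DS.cdf_lim_at_top_prob)
    qed (use F0 assms(8,9) in auto)
    moreover have "v = Inf {x. F x \<ge> \<kappa>}" unfolding v_def VaR_def F_def ..
    ultimately show ?thesis by simp
  qed
  have Pgt: "prob {\<omega>\<in>space M. S \<omega> > v} = 1 - \<kappa>"
  proof -
    have "{\<omega>\<in>space M. S \<omega> > v} = space M - {\<omega>\<in>space M. S \<omega> \<le> v}" by auto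
    then have "prob {\<omega>\<in>space M. S \<omega> > v} = 1 - F v"
      unfolding F_def by (simp add: prob_compl)
    then show ?thesis using vF by simp
  qed
  have v0: "0 < v" using vF by simp
  define L where "L = laplace_tr M \<Theta>"
  have L_eq: "L = (\<lambda>t. LINT \<omega>|M. exp(-t*\<Theta> \<omega>))" unfolding L_def laplace_tr_def ..
  have T0: "\<forall>\<omega>\<in>space M. 0 \<le> \<Theta> \<omega>" using Tpos by (auto intro: less_imp_le)
  define Dk where "Dk = (\<lambda>j x. LINT \<omega>|M. (-\<Theta> \<omega>)^j * exp(-x*\<Theta> \<omega>))"
  have derivL: "(deriv^^j) L x = Dk j x" if "0 < x" for j x
    using lap_iter_deriv[OF Tm T0, of j] that unfolding L_eq Dk_def by auto
  define B where "B = (\<lambda>j. LINT \<omega>|M. \<Theta> \<omega>^j * exp(- v * \<Theta> \<omega>))"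
  have BD: "(-1)^(i+1) * (deriv^^(i-1)) L v = B (i-1)" if iI: "i \<in> {1..n}" for i
  proof -
    obtain j where j: "i = Suc j" using iI by (cases i) auto
    have "Dk j v = (LINT \<omega>|M. (-1)^j * (\<Theta> \<omega>^j * exp(- v * \<Theta> \<omega>)))"
      unfolding Dk_def by (rule Bochner_Integration.integral_cong[OF refl]) (rule negp)
    also have "\<dots> = (-1)^j * B j" unfolding B_def by (rule integral_mult_right_zero)
    finally have "Dk j v = (-1)^j * B j" .
    then have "(-1)^(i+1) * (deriv^^(i-1)) L v = (-1)^(Suc j + 1) * ((-1)^j * B j)"
      using derivL[OF v0, of j] unfolding j by simp
    also have "\<dots> = ((-1)^(Suc j + 1) * (-1)^j) * B j" by (simp only: mult.assoc)
    also have "\<dots> = B j" by (simp only: neg1 mult_1)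
    finally show ?thesis unfolding j by simp
  qed
  have B_int: "integrable M (\<lambda>\<omega>. \<Theta> \<omega>^j * exp(- v * \<Theta> \<omega>))" for j
    by (rule lap_integrable2[OF Tm T0 v0])
  define A where "A = (LBINT x:{v..}. L x)"
  have Lnn: "0 \<le> L x" for x unfolding L_eq by (rule integral_nonneg_AE) simp
  have A_nn: "(\<integral>\<^sup>+\<omega>. ennreal (exp(- v * \<Theta> \<omega>)/\<Theta> \<omega>) \<partial>M) = ennreal A"
  proof -
    interpret MP: pair_sigma_finite M lborel
      by (rule pair_sigma_finite.intro) (unfold_locales)
    have "(\<integral>\<^sup>+\<omega>. ennreal (exp(- v * \<Theta> \<omega>)/\<Theta> \<omega>) \<partial>M)
        = (\<integral>\<^sup>+\<omega>. (\<integral>\<^sup>+x. ennreal (exp(-x*\<Theta> \<omega>)) * indicator {v..} x \<partial>lborel) \<partial>M)"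
      by (rule nn_integral_cong) (use Tpos tail_exp_nn in auto)
    also have "\<dots> = (\<integral>\<^sup>+x. (\<integral>\<^sup>+\<omega>. ennreal (exp(-x*\<Theta> \<omega>)) * indicator {v..} x \<partial>M) \<partial>lborel)"
      by (rule MP.Fubini'[symmetric]) measurable
    also have "\<dots> = (\<integral>\<^sup>+x. ennreal (L x * indicator {v..} x) \<partial>lborel)"
    proof (rule nn_integral_cong)
      fix x :: real
      show "(\<integral>\<^sup>+\<omega>. ennreal (exp(-x*\<Theta> \<omega>)) * indicator {v..} x \<partial>M) = ennreal (L x * indicator {v..} x)"
      proof (cases "v \<le> x")
        case True
        then have x0: "0 < x" using v0 by simp
        have "integrable M (\<lambda>\<omega>. exp(-x*\<Theta> \<omega>))"
          using lap_integrable2[OF Tm T0 x0, of 0] by simp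
        then have "(\<integral>\<^sup>+\<omega>. ennreal (exp(-x*\<Theta> \<omega>)) \<partial>M) = ennreal (L x)"
          unfolding L_eq by (subst nn_integral_eq_integral) auto
        then show ?thesis using True by (simp add: indicator_def)
      qed (simp add: indicator_def)
    qed
    also have "\<dots> = ennreal A"
    proof -
      have si: "set_integrable lborel {v..} L"
        using set_integrable_subset[OF assms(5)[folded L_def], of "{v..}"] v0 by auto
      then have "integrable lborel (\<lambda>x. L x * indicator {v..} x)"
        unfolding set_integrable_def by (simp add: mult.commute)
      moreover have "A = (LINT x|lborel. L x * indicator {v..} x)"
        unfolding A_def set_lebesgue_integral_def by (simp add: mult.commute)
      ultimately show ?thesis
        by (subst nn_integral_eq_integral) (auto simp: Lnn)
    qed
    finally show ?thesis .
  qed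
  have A0: "0 \<le> A" unfolding A_def set_lebesgue_integral_def
    by (rule integral_nonneg_AE) (auto intro!: AE_I2 simp: Lnn)
  have A_int: "integrable M (\<lambda>\<omega>. exp(- v * \<Theta> \<omega>)/\<Theta> \<omega>)" and A_val: "(LINT \<omega>|M. exp(- v * \<Theta> \<omega>)/\<Theta> \<omega>) = A"
    using nn_integral_eq_integrable[of "\<lambda>\<omega>. exp(- v * \<Theta> \<omega>)/\<Theta> \<omega>" M A] A_nn A0 Tpos
    by (auto intro!: AE_I2 simp: less_imp_le)
  define h where "h = (\<lambda>t. real n * (exp(- v * t)/t + (\<Sum>k=1..n. v^k/fact k * (t^(k-1) * exp(- v * t)))))"
  have h_int: "integrable M (\<lambda>\<omega>. h (\<Theta> \<omega>))"
    unfolding h_def using A_int B_int by (intro integrable_mult_right integrable_add integrable_sum) auto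
  define c where "c = real n * (A + (\<Sum>k=1..n. v^k/fact k * B (k-1)))"
  have h_val: "(LINT \<omega>|M. h (\<Theta> \<omega>)) = c"
    unfolding h_def c_def using A_int B_int A_val
    by (simp add: integral_sum B_def)
  have h_nonneg: "0 \<le> h (\<Theta> \<omega>)" if "\<omega> \<in> space M" for \<omega>
  proof -
    have t: "0 < \<Theta> \<omega>" using Tpos that by auto
    show ?thesis unfolding h_def
      by (intro mult_nonneg_nonneg add_nonneg_nonneg sum_nonneg divide_nonneg_nonneg) (use t v0 in auto)
  qed
  have main_nn: "(\<integral>\<^sup>+\<omega>. ennreal (S \<omega> * indicator {\<omega>\<in>space M. S \<omega> > v} \<omega>) \<partial>M) = ennreal c"
  proof -
    define G where "G = (\<lambda>p::real\<times>real. ennreal (if v < snd p / fst p then snd p / fst p else 0))"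
    have "(\<integral>\<^sup>+\<omega>. ennreal (S \<omega> * indicator {\<omega>\<in>space M. S \<omega> > v} \<omega>) \<partial>M)
        = (\<integral>\<^sup>+\<omega>. G (\<Theta> \<omega>, W \<omega>) \<partial>M)"
      by (rule nn_integral_cong) (auto simp: G_def SW indicator_def)
    also have "\<dots> = (\<integral>\<^sup>+\<omega>. (\<integral>\<^sup>+y. ennreal (erlang_density (n-1) 1 y) * G (\<Theta> \<omega>, y) \<partial>lborel) \<partial>M)"
      by (rule joint_nn[OF indTW Wd]) (unfold G_def, measurable)
    also have "\<dots> = (\<integral>\<^sup>+\<omega>. ennreal (h (\<Theta> \<omega>)) \<partial>M)"
    proof (rule nn_integral_cong)
      fix \<omega> assume "\<omega> \<in> space M"
      then have "0 < \<Theta> \<omega>" using Tpos by auto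
      then show "(\<integral>\<^sup>+y. ennreal (erlang_density (n-1) 1 y) * G (\<Theta> \<omega>, y) \<partial>lborel) = ennreal (h (\<Theta> \<omega>))"
        unfolding G_def h_def by (simp only: prod.sel) (use inner_erl[of "\<Theta> \<omega>" v n] v0 assms(2) in simp)
    qed
    also have "\<dots> = ennreal c"
      using h_val h_int h_nonneg by (subst nn_integral_eq_integral) auto
    finally show ?thesis .
  qed
  have "0 \<le> (LINT \<omega>|M. h (\<Theta> \<omega>))" by (rule integral_nonneg_AE) (auto intro!: AE_I2 h_nonneg)
  then have c0: "0 \<le> c" using h_val by simp
  have AEnn: "AE \<omega> in M. 0 \<le> S \<omega> * indicator {\<omega>\<in>space M. S \<omega> > v} \<omega>"
    by (rule AE_I2) (use v0 in \<open>auto simp: indicator_def\<close>)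
  have Emeas: "(\<lambda>\<omega>. S \<omega> * indicator {\<omega>\<in>space M. S \<omega> > v} \<omega>) \<in> borel_measurable M"
    by measurable
  have E_val: "(LINT \<omega>|M. S \<omega> * indicator {\<omega>\<in>space M. S \<omega> > v} \<omega>) = c"
    using nn_integral_eq_integrable[OF Emeas AEnn c0] main_nn by simp
  have TV: "TVaR M S \<kappa> = c / (1 - \<kappa>)"
    unfolding TVaR_def v_def[symmetric] E_val Pgt ..
  have sum_eq: "(\<Sum>i=1..n. (-1) ^ (i + 1) / fact i * v ^ i * (deriv ^^ (i - 1)) L v)
      = (\<Sum>k=1..n. v^k/fact k * B (k-1))"
  proof (rule sum.cong)
    fix i assume i: "i \<in> {1..n}"
    show "(-1) ^ (i + 1) / fact i * v ^ i * (deriv ^^ (i - 1)) L v = v^i/fact i * B (i-1)"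
      unfolding BD[OF i, symmetric] by (simp only: divide_inverse mult_ac)
  qed simp
  show ?thesis
    unfolding Let_def S_def[symmetric] v_def[symmetric] L_def[symmetric] A_def[symmetric] TV sum_eq
    unfolding c_def by (rule final_alg)
qed


end
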